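(* Let $G(\vec x,\vec y)$ be a propositional formula over Boolean variables $\vec x=(x_0,\dots,x_{m-1})$ and $\vec y=(y_0,\dots,y_{n-1})$, and let $\psi \equiv \exists \vec x.\,\forall \vec y.\, G(\vec x,\vec y)$. Let $\mathit{enc}:\mathbb{B}^m\to[0,2^m-1]$ be the standard binary encoding with $x_0$ the lowest-order bit, and for $\vec x \neq \top^m$ (the all-true vector) let $\mathit{succ}(\vec x)$ be the unique vector with $\mathit{enc}(\mathit{succ}(\vec x)) = \mathit{enc}(\vec x)+1$. Consider the transition system with state space $\mathbb{B}^m\times\mathbb{B}$ (states $(\vec x,o)$), initial condition $I \equiv (\vec x=\bot^m \land o=\bot)$, and transition relation $$\tau(\vec x,o,\vec x',o') \equiv \Big(\lnot(\forall \vec y.\,G(\vec x,\vec y)) \land \big((\vec x\neq\top^m \land \vec x'=\mathit{succ}(\vec x)\land o'=o)\lor(\vec x=\top^m\land o'=\top)\big)\Big) \lor \big(\vec x'=\vec x\land o'=o\big).$$ Then there exists an inductive invariant $R\subseteq \mathbb{B}^m\times\mathbb{B}$ of this system with $R\neq \mathbb{B}^m\times\mathbb{B}$ if and only if $\psi$ is true. *)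

theory Defs
  imports Main
begin

datatype pform = PX nat | PY nat | PTrue | PFalse
  | PNot pform | PAnd pform pform | POr pform pform

fun peval :: "pform \<Rightarrow> bool list \<Rightarrow> bool list \<Rightarrow> bool" where
  "peval (PX i) xs ys = xs ! i"
| "peval (PY j) xs ys = ys ! j"
| "peval PTrue xs ys = True"
| "peval PFalse xs ys = False"
| "peval (PNot f) xs ys = (\<not> peval f xs ys)"
| "peval (PAnd f g) xs ys = (peval f xs ys \<and> peval g xs ys)"
| "peval (POr f g) xs ys = (peval f xs ys \<or> peval g xs ys)"

fun vars_ok :: "nat \<Rightarrow> nat \<Rightarrow> pform \<Rightarrow> bool" where
  "vars_ok m n (PX i) = (i < m)"
| "vars_ok m n (PY j) = (j < n)"
| "vars_ok m n PTrue = True"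
| "vars_ok m n PFalse = True"
| "vars_ok m n (PNot f) = vars_ok m n f"
| "vars_ok m n (PAnd f g) = (vars_ok m n f \<and> vars_ok m n g)"
| "vars_ok m n (POr f g) = (vars_ok m n f \<and> vars_ok m n g)"

definition psi :: "nat \<Rightarrow> nat \<Rightarrow> pform \<Rightarrow> bool" where
  "psi m n G = (\<exists>xs. length xs = m \<and> (\<forall>ys. length ys = n \<longrightarrow> peval G xs ys))"

definition enc :: "bool list \<Rightarrow> nat" where
  "enc xs = (\<Sum>i<length xs. if xs ! i then 2 ^ i else 0)"

definition succ_vec :: "nat \<Rightarrow> bool list \<Rightarrow> bool list" where
  "succ_vec m xs = (THE ys. length ys = m \<and> enc ys = enc xs + 1)"

definition state_space :: "nat \<Rightarrow> (bool list \<times> bool) set" where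
  "state_space m = {xs. length xs = m} \<times> UNIV"

definition init_states :: "nat \<Rightarrow> (bool list \<times> bool) set" where
  "init_states m = {(replicate m False, False)}"

definition trans :: "nat \<Rightarrow> nat \<Rightarrow> pform \<Rightarrow> bool list \<times> bool \<Rightarrow> bool list \<times> bool \<Rightarrow> bool" where
  "trans m n G s s' = (case s of (xs, o1) \<Rightarrow> case s' of (xs', o1') \<Rightarrow>
      ((\<not> (\<forall>ys. length ys = n \<longrightarrow> peval G xs ys)) \<and>
         ((xs \<noteq> replicate m True \<and> xs' = succ_vec m xs \<and> o1' = o1)
          \<or> (xs = replicate m True \<and> o1' = True)))
      \<or> (xs' = xs \<and> o1' = o1))"

definition inductive_invariant :: "nat \<Rightarrow> nat \<Rightarrow> pform \<Rightarrow> (bool list \<times> bool) set \<Rightarrow> bool" where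
  "inductive_invariant m n G R \<longleftrightarrow>
     R \<subseteq> state_space m \<and> init_states m \<subseteq> R \<and>
     (\<forall>s\<in>R. \<forall>s'\<in>state_space m. trans m n G s s' \<longrightarrow> s' \<in> R)"

end

theory Submission
  imports Defs
begin

lemma enc_Nil[simp]: "enc [] = 0" by (simp add: enc_def)

lemma enc_Cons[simp]: "enc (x # xs) = (if x then 1 else 0) + 2 * enc xs"
proof -
  have "enc (x # xs) = (\<Sum>i<Suc (length xs). if (x # xs) ! i then 2 ^ i else 0)"
    by (simp add: enc_def del: sum.lessThan_Suc)
  also have "\<dots> = (if x then 1 else 0) + (\<Sum>i<length xs. if xs ! i then 2 ^ Suc i else 0)"
    by (subst sum.lessThan_Suc_shift) simp
  also have "(\<Sum>i<length xs. if xs ! i then 2 ^ Suc i else 0) = 2 * enc xs"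
    unfolding enc_def sum_distrib_left by (rule sum.cong) auto
  finally show ?thesis .
qed

fun dec :: "nat \<Rightarrow> nat \<Rightarrow> bool list" where
  "dec 0 k = []"
| "dec (Suc m) k = odd k # dec m (k div 2)"

lemma length_dec[simp]: "length (dec m k) = m"
  by (induction m arbitrary: k) auto

lemma enc_less: "enc xs < 2 ^ length xs"
  by (induction xs) auto

lemma enc_dec: "enc (dec m k) = k mod 2 ^ m"
proof (induction m arbitrary: k)
  case 0 then show ?case by simp
next
  case (Suc m)
  have "k mod 2 ^ Suc m = k mod 2 + 2 * (k div 2 mod 2 ^ m)"
    by (simp add: mod_mult2_eq mult.commute)
  then show ?case using Suc by (auto simp: odd_iff_mod_2_eq_one even_iff_mod_2_eq_zero)
qed

lemma dec_enc: "dec (length xs) (enc xs) = xs"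
  by (induction xs) auto

lemma enc_inj: "length xs = length ys \<Longrightarrow> enc xs = enc ys \<Longrightarrow> xs = ys"
  by (metis dec_enc)

lemma enc_False: "enc (replicate m False) = 0"
  by (induction m) auto

lemma enc_True: "enc (replicate m True) = 2 ^ m - 1"
proof (induction m)
  case 0 then show ?case by simp
next
  case (Suc m)
  have "(2::nat) ^ m \<ge> 1" by simp
  then obtain k where "(2::nat) ^ m = Suc k" using not0_implies_Suc by (metis power_not_zero zero_neq_numeral)
  then show ?case using Suc by simp
qed

lemma enc_not_top:
  assumes "length xs = m" "xs \<noteq> replicate m True"
  shows "enc xs + 1 < 2 ^ m"
proof -
  have "enc xs < 2 ^ m" using enc_less assms by auto
  moreover have "enc xs \<noteq> 2 ^ m - 1"
    using enc_inj[of xs "replicate m True"] assms enc_True by auto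
  ultimately show ?thesis by linarith
qed

lemma succ_vec_eq:
  assumes "length xs = m" "enc xs + 1 < 2 ^ m"
  shows "succ_vec m xs = dec m (enc xs + 1)"
  unfolding succ_vec_def
proof (rule the_equality)
  show "length (dec m (enc xs + 1)) = m \<and> enc (dec m (enc xs + 1)) = enc xs + 1"
    using assms by (simp add: enc_dec)
next
  fix ys assume "length ys = m \<and> enc ys = enc xs + 1"
  then show "ys = dec m (enc xs + 1)" by (metis dec_enc)
qed

theorem mainTheorem2:
  fixes m n :: nat and G :: pform
  assumes "vars_ok m n G"
  shows "(\<exists>R. inductive_invariant m n G R \<and> R \<noteq> state_space m) \<longleftrightarrow> psi m n G"
proof
  assume "\<exists>R. inductive_invariant m n G R \<and> R \<noteq> state_space m"
  then obtain R where inv: "inductive_invariant m n G R" and ne: "R \<noteq> state_space m" by blast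
  show "psi m n G"
  proof (rule ccontr)
    assume np: "\<not> psi m n G"
    have bad: "\<And>xs. length xs = m \<Longrightarrow> \<not> (\<forall>ys. length ys = n \<longrightarrow> peval G xs ys)"
      using np unfolding psi_def by blast
    have sub: "R \<subseteq> state_space m" and ini: "(replicate m False, False) \<in> R"
      and cl: "\<And>s s'. s \<in> R \<Longrightarrow> s' \<in> state_space m \<Longrightarrow> trans m n G s s' \<Longrightarrow> s' \<in> R"
      using inv unfolding inductive_invariant_def init_states_def by auto
    have chain: "k < 2 ^ m \<Longrightarrow> (dec m k, False) \<in> R" for k
    proof (induction k)
      case 0
      have "dec m 0 = replicate m False"
        using dec_enc[of "replicate m False"] enc_False by simp
      then show ?case using ini by simp
    next
      case (Suc k)
      let ?xs = "dec m k"
      have ek: "enc ?xs = k" using Suc.prems by (simp add: enc_dec)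
      have nt: "?xs \<noteq> replicate m True"
        using ek enc_True Suc.prems by auto
      have sv: "succ_vec m ?xs = dec m (Suc k)"
        using succ_vec_eq[of ?xs m] ek Suc.prems by simp
      have "trans m n G (?xs, False) (dec m (Suc k), False)"
        unfolding trans_def using bad[of ?xs] nt sv by auto
      then show ?case using cl[of "(?xs, False)" "(dec m (Suc k), False)"] Suc
        by (auto simp: state_space_def)
    qed
    have allF: "length xs = m \<Longrightarrow> (xs, False) \<in> R" for xs
      using chain[of "enc xs"] enc_less[of xs] dec_enc[of xs] by simp
    have topF: "(replicate m True, False) \<in> R" using allF by simp
    have allT: "length xs = m \<Longrightarrow> (xs, True) \<in> R" for xs
    proof -
      assume l: "length xs = m"
      have "trans m n G (replicate m True, False) (xs, True)"
        unfolding trans_def using bad[of "replicate m True"] by auto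
      then show ?thesis using cl[OF topF] l by (auto simp: state_space_def)
    qed
    have "state_space m \<subseteq> R"
    proof
      fix s assume "s \<in> state_space m"
      then obtain xs b where "s = (xs, b)" "length xs = m" by (auto simp: state_space_def)
      then show "s \<in> R" using allF allT by (cases b) auto
    qed
    with sub ne show False by blast
  qed
next
  assume "psi m n G"
  then obtain xs0 where l0: "length xs0 = m" and g0: "\<forall>ys. length ys = n \<longrightarrow> peval G xs0 ys"
    unfolding psi_def by blast
  define R where "R = {(xs, False) | xs. length xs = m \<and> enc xs \<le> enc xs0}"
  have "inductive_invariant m n G R"
    unfolding inductive_invariant_def
  proof (intro conjI ballI impI)
    show "R \<subseteq> state_space m" by (auto simp: R_def state_space_def)
    show "init_states m \<subseteq> R" by (auto simp: R_def init_states_def enc_False)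
  next
    fix s s' assume s: "s \<in> R" and s': "s' \<in> state_space m" and t: "trans m n G s s'"
    obtain xs where sx: "s = (xs, False)" "length xs = m" "enc xs \<le> enc xs0"
      using s by (auto simp: R_def)
    obtain xs' b where sx': "s' = (xs', b)" "length xs' = m" using s' by (auto simp: state_space_def)
    show "s' \<in> R"
    proof (cases "\<forall>ys. length ys = n \<longrightarrow> peval G xs ys")
      case True
      then show ?thesis using t sx sx' s by (auto simp: trans_def)
    next
      case False
      then have "xs \<noteq> xs0" using g0 by blast
      then have "enc xs \<noteq> enc xs0" using enc_inj l0 sx by metis
      then have lt: "enc xs < enc xs0" using sx by simp
      have "enc xs0 < 2 ^ m" using enc_less l0 by auto
      then have lt2: "enc xs + 1 < 2 ^ m" using lt by simp
      have nt: "xs \<noteq> replicate m True"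
        using lt2 enc_True by auto
      have sv: "succ_vec m xs = dec m (enc xs + 1)" using succ_vec_eq[OF sx(2) lt2] by simp
      have "(xs' = dec m (enc xs + 1) \<and> b = False) \<or> (xs' = xs \<and> b = False)"
        using t nt sv sx sx' by (auto simp: trans_def)
      then show ?thesis
        using sx sx' s lt lt2 by (auto simp: R_def enc_dec)
    qed
  qed
  moreover have "R \<noteq> state_space m"
  proof
    assume "R = state_space m"
    moreover have "(replicate m False, True) \<in> state_space m" by (simp add: state_space_def)
    ultimately show False by (auto simp: R_def)
  qed
  ultimately show "\<exists>R. inductive_invariant m n G R \<and> R \<noteq> state_space m" by blast
qed

end
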